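(* Let $\mathcal G=(\mathcal V,\mathcal E,W)$ be a network, $h\in\mathbb{R}^{\mathcal V}$, and consider the SNC game with binary actions on $\mathcal G$ with external field $h$, with set of Nash equilibria $\mathcal N$. Let $\mathcal V=\mathcal R\cup\mathcal S$, $\mathcal R\cap\mathcal S=\emptyset$, be a binary partition such that $\mathcal G_{\mathcal R}$ and $\mathcal G_{\mathcal S}$ are both structurally balanced, and let $\tau\in\{\pm1\}^{\mathcal R}$ be such that $\mathcal G_{\mathcal R}^{[\tau]}$ is unsigned. Let $h^-,h^+\in\mathbb{R}^{\mathcal R}$ be given by $h_i^+=\tau_ih_i+w_i^{\mathcal S}$ and $h_i^-=\tau_ih_i-w_i^{\mathcal S}$ for $i\in\mathcal R$. If $\mathcal G_{\mathcal R}$ is $(h^-,h^+)$-indecomposable and $w_i^{\mathcal R}-|h_i|>w_i^{\mathcal S}$ for all $i\in\mathcal R$, then the set $\{x^*\in\mathcal N:\ x^*_{\mathcal R}\in\{\tau,-\tau\}\}$ is globally BR-reachable.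
   Context: A network is a triple $\mathcal G=(\mathcal V,\mathcal E,W)$ where $\mathcal V$ is a finite nonempty set, $\mathcal E\subseteq\mathcal V\times\mathcal V$, and $W\in\mathbb{R}^{\mathcal V\times\mathcal V}$ has zero diagonal and satisfies $W_{ij}\neq0$ iff $(i,j)\in\mathcal E$ (weights may have either sign). It is unsigned if $W\ge0$ entrywise. For $\mathcal U\subseteq\mathcal V$, the subnetwork $\mathcal G_{\mathcal U}$ has node set $\mathcal U$, links $\mathcal E\cap(\mathcal U\times\mathcal U)$ and weight matrix $W_{\mathcal U\mathcal U}$. A network is structurally balanced if its node set can be written as a disjoint union of two sets with nonnegative weights on links within each set and nonpositive weights on links between the two sets. For $\tau\in\{\pm1\}^{\mathcal R}$, $\mathcal G_{\mathcal R}^{[\tau]}$ is the network with the same nodes and links as $\mathcal G_{\mathcal R}$ and weight matrix $[\tau]W_{\mathcal R\mathcal R}[\tau]$, where $[\tau]$ is the diagonal matrix with diagonal $\tau$. For $i\in\mathcal V$ and $\mathcal B\subseteq\mathcal V$, $w_i^{\mathcal B}=\sum_{j\in\mathcal B}|W_{ij}|$. Indecomposability: a network with node set $\mathcal U$ and $h^-\le h^+$ in $\mathbb{R}^{\mathcal U}$ is $(h^-,h^+)$-indecomposable if for every partition $\mathcal U=\mathcal U^-\cup\mathcal U^+$ into two disjoint nonempty sets there is a node $i$ with either $i\in\mathcal U^+$ and $w_i^{\mathcal U^+}+h_i^+<w_i^{\mathcal U^-}$, or $i\in\mathcal U^-$ and $w_i^{\mathcal U^-}-h_i^-<w_i^{\mathcal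 U^+}$. The SNC game with binary actions on $\mathcal G$ with external field $h\in\mathbb{R}^{\mathcal V}$ has player set $\mathcal V$, action set $\{-1,+1\}$ for each player, strategy profiles $\mathcal X=\{\pm1\}^{\mathcal V}$, and utilities $u_i(x)=h_ix_i+x_i\sum_{j\in\mathcal V}W_{ij}x_j$. Best responses $\mathcal B_i(x_{-i})=\arg\max_{x_i\in\{\pm1\}}u_i(x_i,x_{-i})$; Nash equilibrium: $x^*_i\in\mathcal B_i(x^*_{-i})$ for all $i$. A BR-path of length $l\ge0$ from $x$ to $y$ is a sequence $x^{(0)}=x,\dots,x^{(l)}=y$ such that for each $k$ some player $i_k$ has $x^{(k)}_{-i_k}=x^{(k-1)}_{-i_k}$ and $x^{(k)}_{i_k}\in\mathcal B_{i_k}(x^{(k-1)}_{-i_k})\setminus\{x^{(k-1)}_{i_k}\}$. A set $\mathcal X^*\subseteq\mathcal X$ is globally BR-reachable if from every profile there is a BR-path to some element of $\mathcal X^*$. *)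

theory Defs
  imports Complex_Main
begin

text \<open>Networks: the node set is a finite type 'v; W :: 'v => 'v => real is the weight
matrix (zero diagonal assumed in the theorem); the link set is {(i,j). W i j \<noteq> 0}.\<close>

definition structurally_balanced :: "'v set \<Rightarrow> ('v \<Rightarrow> 'v \<Rightarrow> real) \<Rightarrow> bool" where
  "structurally_balanced U W \<longleftrightarrow>
     (\<exists>A B. A \<inter> B = {} \<and> A \<union> B = U \<and>
        (\<forall>i\<in>U. \<forall>j\<in>U. ((i \<in> A \<and> j \<in> A) \<or> (i \<in> B \<and> j \<in> B)) \<longrightarrow> W i j \<ge> 0) \<and>
        (\<forall>i\<in>U. \<forall>j\<in>U. ((i \<in> A \<and> j \<in> B) \<or> (i \<in> B \<and> j \<in> A)) \<longrightarrow> W i j \<le> 0))"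

definition gauge :: "('v \<Rightarrow> real) \<Rightarrow> ('v \<Rightarrow> 'v \<Rightarrow> real) \<Rightarrow> 'v \<Rightarrow> 'v \<Rightarrow> real" where
  "gauge \<tau> W i j = \<tau> i * W i j * \<tau> j"

definition unsigned_on :: "'v set \<Rightarrow> ('v \<Rightarrow> 'v \<Rightarrow> real) \<Rightarrow> bool" where
  "unsigned_on U W \<longleftrightarrow> (\<forall>i\<in>U. \<forall>j\<in>U. W i j \<ge> 0)"

definition wsum :: "('v \<Rightarrow> 'v \<Rightarrow> real) \<Rightarrow> 'v \<Rightarrow> 'v set \<Rightarrow> real" where
  "wsum W i B = (\<Sum>j\<in>B. \<bar>W i j\<bar>)"

definition indecomposable :: "'v set \<Rightarrow> ('v \<Rightarrow> 'v \<Rightarrow> real) \<Rightarrow> ('v \<Rightarrow> real) \<Rightarrow> ('v \<Rightarrow> real) \<Rightarrow> bool" where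
  "indecomposable U W hm hp \<longleftrightarrow>
     (\<forall>Um Up. Um \<inter> Up = {} \<and> Um \<union> Up = U \<and> Um \<noteq> {} \<and> Up \<noteq> {} \<longrightarrow>
        (\<exists>i. (i \<in> Up \<and> wsum W i Up + hp i < wsum W i Um) \<or>
             (i \<in> Um \<and> wsum W i Um - hm i < wsum W i Up)))"

definition profiles :: "('v \<Rightarrow> real) set" where
  "profiles = {x. \<forall>i. x i \<in> {-1, 1}}"

definition utility :: "('v::finite \<Rightarrow> 'v \<Rightarrow> real) \<Rightarrow> ('v \<Rightarrow> real) \<Rightarrow> 'v \<Rightarrow> ('v \<Rightarrow> real) \<Rightarrow> real" where
  "utility W h i x = h i * x i + x i * (\<Sum>j\<in>UNIV. W i j * x j)"

definition best_resp :: "('v::finite \<Rightarrow> 'v \<Rightarrow> real) \<Rightarrow> ('v \<Rightarrow> real) \<Rightarrow> 'v \<Rightarrow> ('v \<Rightarrow> real) \<Rightarrow> real set" where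
  "best_resp W h i x = {a \<in> {-1, 1}. \<forall>b\<in>{-1, 1}. utility W h i (x(i := b)) \<le> utility W h i (x(i := a))}"

definition nash :: "('v::finite \<Rightarrow> 'v \<Rightarrow> real) \<Rightarrow> ('v \<Rightarrow> real) \<Rightarrow> ('v \<Rightarrow> real) set" where
  "nash W h = {x \<in> profiles. \<forall>i. x i \<in> best_resp W h i x}"

definition br_step :: "('v::finite \<Rightarrow> 'v \<Rightarrow> real) \<Rightarrow> ('v \<Rightarrow> real) \<Rightarrow> ('v \<Rightarrow> real) \<Rightarrow> ('v \<Rightarrow> real) \<Rightarrow> bool" where
  "br_step W h x y \<longleftrightarrow> (\<exists>i a. a \<in> best_resp W h i x \<and> a \<noteq> x i \<and> y = x(i := a))"

definition globally_BR_reachable :: "('v::finite \<Rightarrow> 'v \<Rightarrow> real) \<Rightarrow> ('v \<Rightarrow> real) \<Rightarrow> ('v \<Rightarrow> real) set \<Rightarrow> bool" where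
  "globally_BR_reachable W h T \<longleftrightarrow> (\<forall>x\<in>profiles. \<exists>y\<in>T. (br_step W h)\<^sup>*\<^sup>* x y)"

end

theory Submission
  imports Defs
begin

definition Fv :: "('v::finite \<Rightarrow> 'v \<Rightarrow> real) \<Rightarrow> ('v \<Rightarrow> real) \<Rightarrow> 'v \<Rightarrow> ('v \<Rightarrow> real) \<Rightarrow> real" where
  "Fv W h i x = h i + (\<Sum>j\<in>UNIV. W i j * x j)"

lemma sum_upd:
  fixes W :: "'v::finite \<Rightarrow> 'v \<Rightarrow> real"
  shows "(\<Sum>j\<in>UNIV. W i j * (x(k:=b)) j) = (\<Sum>j\<in>UNIV. W i j * x j) + W i k * (b - x k)"
proof -
  have "(\<Sum>j\<in>UNIV. W i j * (x(k:=b)) j)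
      = (\<Sum>j\<in>UNIV. W i j * x j + (if j = k then W i k * (b - x k) else 0))"
    by (rule sum.cong) (auto simp: algebra_simps)
  then show ?thesis by (simp add: sum.distrib)
qed

lemma Fv_upd: "Fv W h i (x(k:=b)) = Fv W h i x + W i k * (b - x k)"
  unfolding Fv_def using sum_upd[of W i x k b] by simp

lemma util: "W i i = 0 \<Longrightarrow> utility W h i (x(i:=b)) = b * Fv W h i x"
  unfolding utility_def Fv_def using sum_upd[of W i x i b] by (simp add: algebra_simps)

lemma br_iff: "W i i = 0 \<Longrightarrow> a \<in> best_resp W h i x \<longleftrightarrow>
   (a = 1 \<and> Fv W h i x \<ge> 0) \<or> (a = -1 \<and> Fv W h i x \<le> 0)"
  unfolding best_resp_def by (auto simp: util)

lemma br_sign: "W i i = 0 \<Longrightarrow> t \<in> {-1,1} \<Longrightarrow> t \<in> best_resp W h i x \<longleftrightarrow> t * Fv W h i x \<ge> 0"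
  by (auto simp: br_iff)

lemma reach:
  fixes m :: "('v::finite \<Rightarrow> real) \<Rightarrow> nat"
  assumes step: "\<And>x. P x \<Longrightarrow> \<not> Q x \<Longrightarrow> \<exists>y. br_step W h x y \<and> P y \<and> m y < m x"
    and "P x"
  shows "\<exists>y. (br_step W h)\<^sup>*\<^sup>* x y \<and> P y \<and> Q y"
  using assms(2)
proof (induction "m x" arbitrary: x rule: less_induct)
  case less
  show ?case
  proof (cases "Q x")
    case True then show ?thesis using less by blast
  next
    case False
    then obtain y where y: "br_step W h x y" "P y" "m y < m x" using step less by blast
    then obtain z where "(br_step W h)\<^sup>*\<^sup>* y z" "P z" "Q z" using less by blast
    then show ?thesis using y by (meson converse_rtranclp_into_rtranclp)
  qed
qed

lemma keyR:
  fixes W :: "'v::finite \<Rightarrow> 'v \<Rightarrow> real"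
  assumes part: "R \<inter> S = {}" "R \<union> S = UNIV"
    and x: "x \<in> profiles"
    and tau: "\<forall>i\<in>R. \<tau> i \<in> {-1, 1}"
    and uns: "unsigned_on R (gauge \<tau> W)"
    and i: "i \<in> R"
  shows "\<bar>\<tau> i * Fv W h i x - (\<tau> i * h i + wsum W i {j\<in>R. x j = \<tau> j} - wsum W i {j\<in>R. x j \<noteq> \<tau> j})\<bar>
          \<le> wsum W i S"
proof -
  define Up where "Up = {j\<in>R. x j = \<tau> j}"
  define Um where "Um = {j\<in>R. x j \<noteq> \<tau> j}"
  have ti: "\<tau> i * \<tau> i = 1" using tau i by auto
  have s1: "(\<Sum>j\<in>UNIV. W i j * x j) = (\<Sum>j\<in>R. W i j * x j) + (\<Sum>j\<in>S. W i j * x j)"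
    using part by (metis finite sum.union_disjoint)
  have s2: "(\<Sum>j\<in>R. W i j * x j) = (\<Sum>j\<in>Up. W i j * x j) + (\<Sum>j\<in>Um. W i j * x j)"
  proof -
    have "R = Up \<union> Um" "Up \<inter> Um = {}" unfolding Up_def Um_def by auto
    then show ?thesis by (metis finite sum.union_disjoint)
  qed
  have up: "\<tau> i * (\<Sum>j\<in>Up. W i j * x j) = wsum W i Up"
    unfolding wsum_def sum_distrib_left
  proof (rule sum.cong)
    fix j assume j: "j \<in> Up"
    then have "\<tau> i * W i j * \<tau> j \<ge> 0" using uns i unfolding unsigned_on_def gauge_def Up_def by auto
    moreover have "\<bar>\<tau> i * W i j * \<tau> j\<bar> = \<bar>W i j\<bar>" proof -
      have "\<bar>\<tau> i\<bar> = 1" "\<bar>\<tau> j\<bar> = 1" using tau i j unfolding Up_def by auto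
      then show ?thesis by (simp add: abs_mult)
    qed
    ultimately show "\<tau> i * (W i j * x j) = \<bar>W i j\<bar>" using j unfolding Up_def
      by (auto simp: algebra_simps)
  qed simp
  have um: "\<tau> i * (\<Sum>j\<in>Um. W i j * x j) = - wsum W i Um"
    unfolding wsum_def sum_distrib_left sum_negf[symmetric]
  proof (rule sum.cong)
    fix j assume j: "j \<in> Um"
    then have xj: "x j = - \<tau> j" using x tau unfolding Um_def profiles_def by force
    have "\<tau> i * W i j * \<tau> j \<ge> 0" using j uns i unfolding unsigned_on_def gauge_def Um_def by auto
    moreover have "\<bar>\<tau> i * W i j * \<tau> j\<bar> = \<bar>W i j\<bar>" proof -
      have "\<bar>\<tau> i\<bar> = 1" "\<bar>\<tau> j\<bar> = 1" using tau i j unfolding Um_def by auto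
      then show ?thesis by (simp add: abs_mult)
    qed
    ultimately show "\<tau> i * (W i j * x j) = - \<bar>W i j\<bar>" using xj
      by (auto simp: algebra_simps)
  qed simp
  have sS: "\<bar>\<tau> i * (\<Sum>j\<in>S. W i j * x j)\<bar> \<le> wsum W i S"
  proof -
    have "\<bar>\<tau> i * (\<Sum>j\<in>S. W i j * x j)\<bar> = \<bar>\<Sum>j\<in>S. W i j * x j\<bar>"
      using tau i by (auto simp: abs_mult)
    also have "\<dots> \<le> (\<Sum>j\<in>S. \<bar>W i j * x j\<bar>)" by (rule sum_abs)
    also have "\<dots> = wsum W i S" unfolding wsum_def
      proof (rule sum.cong)
      fix j have "x j \<in> {-1,1}" using x unfolding profiles_def by blast
      then have "\<bar>x j\<bar> = 1" by auto
      then show "\<bar>W i j * x j\<bar> = \<bar>W i j\<bar>" by (simp add: abs_mult)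
    qed simp
    finally show ?thesis .
  qed
  have "\<tau> i * Fv W h i x = \<tau> i * h i + wsum W i Up - wsum W i Um + \<tau> i * (\<Sum>j\<in>S. W i j * x j)"
    unfolding Fv_def s1 s2 using up um by (simp add: algebra_simps)
  then show ?thesis using sS unfolding Up_def Um_def by simp
qed


lemma step_br: "a \<in> best_resp W h i x \<Longrightarrow> a \<noteq> x i \<Longrightarrow> br_step W h x (x(i:=a))"
  unfolding br_step_def by blast

lemma prof_upd: "x \<in> profiles \<Longrightarrow> a \<in> {-1,1} \<Longrightarrow> x(i:=a) \<in> profiles"
  unfolding profiles_def by auto

lemma card_less:
  fixes P :: "'v::finite \<Rightarrow> bool"
  assumes "\<And>j. j \<noteq> i \<Longrightarrow> P' j = P j" "P i" "\<not> P' i"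
  shows "card {j\<in>A. P' j} < card {j\<in>A. P j} \<or> i \<notin> A"
proof (cases "i \<in> A")
  case True
  have "{j\<in>A. P' j} \<subset> {j\<in>A. P j}" using assms True by (auto, metis)
  then show ?thesis by (simp add: psubset_card_mono)
qed simp

theorem corollary3:
  fixes W :: "'v::finite \<Rightarrow> 'v \<Rightarrow> real" and h :: "'v \<Rightarrow> real"
    and R S :: "'v set" and \<tau> :: "'v \<Rightarrow> real"
  assumes diag: "\<forall>i. W i i = 0"
    and part: "R \<inter> S = {}" "R \<union> S = UNIV" "R \<noteq> {}" "S \<noteq> {}"
    and balR: "structurally_balanced R W"
    and balS: "structurally_balanced S W"
    and tau: "\<forall>i\<in>R. \<tau> i \<in> {-1, 1}"
    and uns: "unsigned_on R (gauge \<tau> W)"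
    and indec: "indecomposable R W (\<lambda>i. \<tau> i * h i - wsum W i S) (\<lambda>i. \<tau> i * h i + wsum W i S)"
    and dom: "\<forall>i\<in>R. wsum W i R - \<bar>h i\<bar> > wsum W i S"
  shows "globally_BR_reachable W h
           {x \<in> nash W h. (\<forall>i\<in>R. x i = \<tau> i) \<or> (\<forall>i\<in>R. x i = - \<tau> i)}"
proof -
  define I where "I x \<longleftrightarrow> (\<forall>i\<in>R. x i \<noteq> \<tau> i \<longrightarrow> \<tau> i * Fv W h i x < 0)" for x
  define cons where "cons x \<longleftrightarrow> (\<forall>i\<in>R. x i = \<tau> i) \<or> (\<forall>i\<in>R. x i = - \<tau> i)" for x :: "'v \<Rightarrow> real"
  obtain A B where AB: "A \<inter> B = {}" "A \<union> B = S"
    "\<forall>i\<in>S. \<forall>j\<in>S. ((i \<in> A \<and> j \<in> A) \<or> (i \<in> B \<and> j \<in> B)) \<longrightarrow> W i j \<ge> 0"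
    "\<forall>i\<in>S. \<forall>j\<in>S. ((i \<in> A \<and> j \<in> B) \<or> (i \<in> B \<and> j \<in> A)) \<longrightarrow> W i j \<le> 0"
    using balS unfolding structurally_balanced_def by blast
  define \<sigma> where "\<sigma> i = (if i \<in> A then 1 else -1::real)" for i
  have sig: "\<sigma> i \<in> {-1,1}" for i unfolding \<sigma>_def by auto
  have sigW: "\<sigma> i * W i j * \<sigma> j \<ge> 0" if "i \<in> S" "j \<in> S" for i j
    using AB that unfolding \<sigma>_def
    by (cases "i \<in> A"; cases "j \<in> A") (auto simp: mult_nonpos_nonpos mult_nonneg_nonpos)
  have tauW: "\<tau> i * W i j * \<tau> j \<ge> 0" if "i \<in> R" "j \<in> R" for i j
    using uns that unfolding unsigned_on_def gauge_def by auto
  have xval: "x i \<in> {-1,1}" if "x \<in> profiles" for x :: "'v \<Rightarrow> real" and i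
    using that unfolding profiles_def by blast
  have RS: "i \<in> S \<longleftrightarrow> i \<notin> R" for i using part by auto
  show ?thesis unfolding globally_BR_reachable_def
  proof
    fix x0 :: "'v \<Rightarrow> real" assume x0: "x0 \<in> profiles"
    have "\<exists>y. (br_step W h)\<^sup>*\<^sup>* x0 y \<and> y \<in> profiles \<and> I y"
    proof (rule reach[where m = "\<lambda>x. card {j\<in>R. x j \<noteq> \<tau> j}"])
      fix x :: "'v \<Rightarrow> real" assume x: "x \<in> profiles" and nI: "\<not> I x"
      then obtain i where i: "i \<in> R" "x i \<noteq> \<tau> i" "\<tau> i * Fv W h i x \<ge> 0"
        unfolding I_def by force
      have bi: "\<tau> i \<in> best_resp W h i x" using br_sign[of W i "\<tau> i" h x] diag tau i by auto
      show "\<exists>y. br_step W h x y \<and> y \<in> profiles \<and> card {j\<in>R. y j \<noteq> \<tau> j} < card {j\<in>R. x j \<noteq> \<tau> j}"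
      proof -
        define y where "y = x(i:=\<tau> i)"
        have "{j\<in>R. y j \<noteq> \<tau> j} \<subset> {j\<in>R. x j \<noteq> \<tau> j}" using i unfolding y_def by auto
        then have c: "card {j\<in>R. y j \<noteq> \<tau> j} < card {j\<in>R. x j \<noteq> \<tau> j}"
          by (simp add: psubset_card_mono)
        have "br_step W h x y" using step_br[OF bi] i unfolding y_def by auto
        moreover have "y \<in> profiles" using prof_upd[OF x, of "\<tau> i" i] tau i unfolding y_def by auto
        ultimately show ?thesis using c by blast
      qed
    qed (use x0 in auto)
    then obtain x1 where x1: "(br_step W h)\<^sup>*\<^sup>* x0 x1" "x1 \<in> profiles" "I x1" by blast
    have "\<exists>y. (br_step W h)\<^sup>*\<^sup>* x1 y \<and> (y \<in> profiles \<and> I y) \<and> cons y"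
    proof (rule reach[where m = "\<lambda>x. card {j\<in>R. x j = \<tau> j}"])
      fix x :: "'v \<Rightarrow> real" assume xP: "x \<in> profiles \<and> I x" and nc: "\<not> cons x"
      then have x: "x \<in> profiles" and Ix: "I x" by auto
      define Up where "Up = {j\<in>R. x j = \<tau> j}"
      define Um where "Um = {j\<in>R. x j \<noteq> \<tau> j}"
      have "Up \<noteq> {}"
      proof
        assume "Up = {}"
        then have "\<forall>i\<in>R. x i = - \<tau> i" unfolding Up_def using tau xval[OF x] by force
        then show False using nc unfolding cons_def by blast
      qed
      moreover have "Um \<noteq> {}" using nc unfolding Um_def cons_def by auto
      moreover have "Um \<inter> Up = {}" "Um \<union> Up = R" unfolding Um_def Up_def by auto
      ultimately obtain i where
        i: "(i \<in> Up \<and> wsum W i Up + (\<tau> i * h i + wsum W i S) < wsum W i Um) \<or>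
            (i \<in> Um \<and> wsum W i Um - (\<tau> i * h i - wsum W i S) < wsum W i Up)"
        using indec unfolding indecomposable_def by blast
      have iR: "i \<in> R" using i unfolding Up_def Um_def by auto
      have k: "\<bar>\<tau> i * Fv W h i x - (\<tau> i * h i + wsum W i Up - wsum W i Um)\<bar> \<le> wsum W i S"
        using keyR[OF part(1,2) x tau uns iR] unfolding Up_def Um_def .
      have "\<not> (i \<in> Um \<and> wsum W i Um - (\<tau> i * h i - wsum W i S) < wsum W i Up)"
      proof
        assume a: "i \<in> Um \<and> wsum W i Um - (\<tau> i * h i - wsum W i S) < wsum W i Up"
        then have "\<tau> i * Fv W h i x > 0" using k by linarith
        moreover have "\<tau> i * Fv W h i x < 0" using Ix a iR unfolding I_def Um_def by auto
        ultimately show False by simp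
      qed
      then have iUp: "i \<in> Up" and neg: "\<tau> i * Fv W h i x < 0" using i k by linarith+
      have xi: "x i = \<tau> i" using iUp unfolding Up_def by auto
      have ti: "- \<tau> i \<in> {-1,1}" using tau iR by auto
      have bi: "- \<tau> i \<in> best_resp W h i x" using br_sign[of W i "- \<tau> i" h x] ti diag neg by auto
      have ne: "- \<tau> i \<noteq> x i" using xi ti by auto
      define y where "y = x(i := - \<tau> i)"
      have Iy: "I y" unfolding I_def
      proof (intro ballI impI)
        fix j assume j: "j \<in> R" "y j \<noteq> \<tau> j"
        show "\<tau> j * Fv W h j y < 0"
        proof (cases "j = i")
          case True then show ?thesis using neg diag unfolding y_def by (simp add: Fv_upd)
        next
          case False
          then have "x j \<noteq> \<tau> j" using j unfolding y_def by auto
          then have "\<tau> j * Fv W h j x < 0" using Ix j unfolding I_def by auto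
          moreover have "\<tau> j * Fv W h j y = \<tau> j * Fv W h j x - 2 * (\<tau> j * W j i * \<tau> i)"
            unfolding y_def Fv_upd xi by (simp add: algebra_simps)
          moreover have "\<tau> j * W j i * \<tau> i \<ge> 0" using tauW j iR by auto
          ultimately show ?thesis by linarith
        qed
      qed
      show "\<exists>y. br_step W h x y \<and> (y \<in> profiles \<and> I y) \<and> card {j\<in>R. y j = \<tau> j} < card {j\<in>R. x j = \<tau> j}"
      proof -
        have "{j\<in>R. y j = \<tau> j} \<subset> {j\<in>R. x j = \<tau> j}" using iR xi ne unfolding y_def by auto
        then have c: "card {j\<in>R. y j = \<tau> j} < card {j\<in>R. x j = \<tau> j}"
          by (simp add: psubset_card_mono)
        have "br_step W h x y" using step_br[OF bi ne] unfolding y_def by auto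
        moreover have "y \<in> profiles" using prof_upd[OF x ti, of i] unfolding y_def by auto
        ultimately show ?thesis using c Iy by blast
      qed
    qed (use x1 in auto)
    then obtain x2 where x2: "(br_step W h)\<^sup>*\<^sup>* x1 x2" "x2 \<in> profiles" "cons x2" by blast
    have Rok: "x i \<in> best_resp W h i x" if x: "x \<in> profiles" "cons x" and iR: "i \<in> R" for x i
    proof -
      have k: "\<bar>\<tau> i * Fv W h i x - (\<tau> i * h i + wsum W i {j\<in>R. x j = \<tau> j} - wsum W i {j\<in>R. x j \<noteq> \<tau> j})\<bar>
          \<le> wsum W i S" using keyR[OF part(1,2) x(1) tau uns iR] .
      have th: "\<bar>\<tau> i * h i\<bar> = \<bar>h i\<bar>" using tau iR by (auto simp: abs_mult)
      have d: "wsum W i R - \<bar>h i\<bar> > wsum W i S" using dom iR by auto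
      have ws0: "wsum W i {} = 0" unfolding wsum_def by simp
      have "x i \<in> {-1,1}" using xval[OF x(1)] .
      show ?thesis
        using x(2) unfolding cons_def
      proof
        assume a: "\<forall>i\<in>R. x i = \<tau> i"
        then have e1: "{j\<in>R. x j = \<tau> j} = R" and e2: "{j\<in>R. x j \<noteq> \<tau> j} = {}" by auto
        have "- \<bar>h i\<bar> \<le> \<tau> i * h i" "\<tau> i * h i \<le> \<bar>h i\<bar>" using th by linarith+
        then have "\<tau> i * Fv W h i x \<ge> 0" using k d unfolding e1 e2 ws0 abs_le_iff by linarith
        then show ?thesis using br_sign[of W i "\<tau> i" h x] diag tau iR a by auto
      next
        assume a: "\<forall>i\<in>R. x i = - \<tau> i"
        have "\<tau> j \<noteq> 0" if "j \<in> R" for j using tau that by auto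
        then have e1: "{j\<in>R. x j = \<tau> j} = {}" and e2: "{j\<in>R. x j \<noteq> \<tau> j} = R" using a by force+
        have "- \<bar>h i\<bar> \<le> \<tau> i * h i" "\<tau> i * h i \<le> \<bar>h i\<bar>" using th by linarith+
        then have "- \<tau> i * Fv W h i x \<ge> 0" using k d unfolding e1 e2 ws0 abs_le_iff by linarith
        then show ?thesis using br_sign[of W i "- \<tau> i" h x] diag tau iR a by auto
      qed
    qed
    define J where "J x \<longleftrightarrow> (\<forall>i\<in>S. x i = \<sigma> i \<longrightarrow> \<sigma> i * Fv W h i x > 0)" for x
    have "\<exists>y. (br_step W h)\<^sup>*\<^sup>* x2 y \<and> (y \<in> profiles \<and> cons y) \<and> J y"
    proof (rule reach[where m = "\<lambda>x. card {j\<in>S. x j = \<sigma> j}"])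
      fix x :: "'v \<Rightarrow> real" assume xP: "x \<in> profiles \<and> cons x" and nJ: "\<not> J x"
      then have x: "x \<in> profiles" and cx: "cons x" by auto
      obtain i where i: "i \<in> S" "x i = \<sigma> i" "\<sigma> i * Fv W h i x \<le> 0"
        using nJ unfolding J_def by force
      have ti: "- \<sigma> i \<in> {-1,1}" using sig[of i] by auto
      have bi: "- \<sigma> i \<in> best_resp W h i x" using br_sign[of W i "- \<sigma> i" h x] ti diag i by auto
      have ne: "- \<sigma> i \<noteq> x i" using i ti by auto
      have cy: "cons (x(i := - \<sigma> i))" using cx i RS unfolding cons_def by auto
      show "\<exists>y. br_step W h x y \<and> (y \<in> profiles \<and> cons y) \<and> card {j\<in>S. y j = \<sigma> j} < card {j\<in>S. x j = \<sigma> j}"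
      proof -
        define y where "y = x(i := - \<sigma> i)"
        have "{j\<in>S. y j = \<sigma> j} \<subset> {j\<in>S. x j = \<sigma> j}" using i ne unfolding y_def by auto
        then have c: "card {j\<in>S. y j = \<sigma> j} < card {j\<in>S. x j = \<sigma> j}"
          by (simp add: psubset_card_mono)
        have "br_step W h x y" using step_br[OF bi ne] unfolding y_def by auto
        moreover have "y \<in> profiles" using prof_upd[OF x ti, of i] unfolding y_def by auto
        ultimately show ?thesis using c cy unfolding y_def by blast
      qed
    qed (use x2 in auto)
    then obtain x3 where x3: "(br_step W h)\<^sup>*\<^sup>* x2 x3" "x3 \<in> profiles" "cons x3" "J x3" by blast
    have "\<exists>y. (br_step W h)\<^sup>*\<^sup>* x3 y \<and> (y \<in> profiles \<and> cons y \<and> J y)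
              \<and> (\<forall>i\<in>S. y i \<noteq> \<sigma> i \<longrightarrow> \<sigma> i * Fv W h i y \<le> 0)"
    proof (rule reach[where m = "\<lambda>x. card {j\<in>S. x j \<noteq> \<sigma> j}"])
      fix x :: "'v \<Rightarrow> real" assume xP: "x \<in> profiles \<and> cons x \<and> J x"
        and nQ: "\<not> (\<forall>i\<in>S. x i \<noteq> \<sigma> i \<longrightarrow> \<sigma> i * Fv W h i x \<le> 0)"
      then have x: "x \<in> profiles" and cx: "cons x" and Jx: "J x" by auto
      obtain i where i: "i \<in> S" "x i \<noteq> \<sigma> i" "\<sigma> i * Fv W h i x > 0"
        using nQ by force
      have xi: "x i = - \<sigma> i" using i xval[OF x, of i] sig[of i] by auto
      have bi: "\<sigma> i \<in> best_resp W h i x" using br_sign[of W i "\<sigma> i" h x] sig diag i by auto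
      define y where "y = x(i := \<sigma> i)"
      have cy: "cons y" using cx i RS unfolding cons_def y_def by auto
      have Jy: "J y" unfolding J_def
      proof (intro ballI impI)
        fix j assume j: "j \<in> S" "y j = \<sigma> j"
        show "\<sigma> j * Fv W h j y > 0"
        proof (cases "j = i")
          case True then show ?thesis using i diag unfolding y_def by (simp add: Fv_upd)
        next
          case False
          then have "x j = \<sigma> j" using j unfolding y_def by auto
          then have "\<sigma> j * Fv W h j x > 0" using Jx j unfolding J_def by auto
          moreover have "\<sigma> j * Fv W h j y = \<sigma> j * Fv W h j x + 2 * (\<sigma> j * W j i * \<sigma> i)"
            unfolding y_def Fv_upd xi by (simp add: algebra_simps)
          moreover have "\<sigma> j * W j i * \<sigma> i \<ge> 0" using sigW j i by auto
          ultimately show ?thesis by linarith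
        qed
      qed
      show "\<exists>y. br_step W h x y \<and> (y \<in> profiles \<and> cons y \<and> J y) \<and> card {j\<in>S. y j \<noteq> \<sigma> j} < card {j\<in>S. x j \<noteq> \<sigma> j}"
      proof -
        have "{j\<in>S. y j \<noteq> \<sigma> j} \<subset> {j\<in>S. x j \<noteq> \<sigma> j}" using i unfolding y_def by auto
        then have c: "card {j\<in>S. y j \<noteq> \<sigma> j} < card {j\<in>S. x j \<noteq> \<sigma> j}"
          by (simp add: psubset_card_mono)
        have "br_step W h x y" using step_br[OF bi] i unfolding y_def by auto
        moreover have "y \<in> profiles" using prof_upd[OF x sig, of i] unfolding y_def by auto
        ultimately show ?thesis using c cy Jy by blast
      qed
    qed (use x3 in auto)
    then obtain x4 where x4: "(br_step W h)\<^sup>*\<^sup>* x3 x4" "x4 \<in> profiles" "cons x4" "J x4"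
      "\<forall>i\<in>S. x4 i \<noteq> \<sigma> i \<longrightarrow> \<sigma> i * Fv W h i x4 \<le> 0" by blast
    have "x4 \<in> nash W h"
      unfolding nash_def
    proof (intro CollectI conjI allI)
      fix i
      show "x4 i \<in> best_resp W h i x4"
      proof (cases "i \<in> R")
        case True then show ?thesis using Rok x4 by auto
      next
        case False
        then have iS: "i \<in> S" using RS by auto
        show ?thesis
        proof (cases "x4 i = \<sigma> i")
          case True
          then show ?thesis using x4(4) iS br_sign[of W i "\<sigma> i" h x4] sig diag
            unfolding J_def by force
        next
          case False
          then have "x4 i = - \<sigma> i" using xval[OF x4(2), of i] sig[of i] by auto
          moreover have "- \<sigma> i \<in> {-1,1}" using sig[of i] by auto
          ultimately show ?thesis using x4(5) iS br_sign[of W i "- \<sigma> i" h x4] diag False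
            by auto
        qed
      qed
    qed (use x4 in auto)
    moreover have "(br_step W h)\<^sup>*\<^sup>* x0 x4" using x1 x2 x3 x4 by (meson rtranclp_trans)
    ultimately show "\<exists>y\<in>{x \<in> nash W h. (\<forall>i\<in>R. x i = \<tau> i) \<or> (\<forall>i\<in>R. x i = - \<tau> i)}.
         (br_step W h)\<^sup>*\<^sup>* x0 y" using x4(3) unfolding cons_def by blast
  qed
qed

end
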